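(* Let $f:\mathbb{R}^d\to\mathbb{R}$ be differentiable with $L$-Lipschitz gradient, and consider the elastic-scheduling iteration described in the context with learning rate $\alpha\le\frac{1}{6L}$. Then for every node $i$ and every iteration $t\ge0$, $$\mathbb{E}\|\vec x_t-\vec v_t^i\|^2\le 9\sigma^2\alpha^2.$$
   Context: There are $p$ nodes $\mathcal P=\{1,\dots,p\}$, all starting from $\vec v_0^i=\vec 0$, and $\vec x_0=\vec 0$. At iteration $t$ each node $j$ computes $g_t^j=\tilde G(\vec v_t^j)$, a stochastic gradient at its view with $\mathbb{E}\|g_t^j-\nabla f(\vec v_t^j)\|^2\le\sigma^2$, and broadcasts it. A set $\mathcal L_t^i\subseteq\mathcal P$ with $i\in\mathcal L_t^i$ (fixed independently of the randomness) is the set of nodes whose iteration-$t$ gradient reaches node $i$ during iteration $t$; all other iteration-$t$ gradients reach $i$ during iteration $t+1$. Node $i$ substitutes its own gradient for missing ones and corrects afterwards: $$\vec v_{t+1}^i=\vec v_t^i-\frac{\alpha}{p}\Big[\sum_{j\in\mathcal L_t^i}g_t^j+\sum_{j\in\mathcal P\setminus\mathcal L_t^i}g_t^i+\mathbf 1_{t>0}\sum_{j\in\mathcal P\setminus\mathcal L_{t-1}^i}\big(g_{t-1}^j-g_{t-1}^i\big)\Big].$$ The global parameter is $\vec x_{t+1}=\vec x_t-\frac{\alpha}{p}\sum_{j\in\mathcal P}g_t^j$; consequently $\vec v_t^i=\vec x_t+\frac{\alpha}{p}\sum_{j\in\mathcal P\setminus\mathcal L_{t-1}^i}(g_{t-1}^i-g_{t-1}^j)$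 for $t>0$. *)

theory Defs
  imports "HOL-Analysis.Analysis" "HOL-Probability.Probability"
begin

text \<open>Nodes are 1..p. Ls t i is the set of nodes whose
iteration-t gradient reaches node i during iteration t. g t j w is the
stochastic gradient computed by node j at iteration t (outcome w).\<close>

primrec vview :: "real \<Rightarrow> nat \<Rightarrow> (nat \<Rightarrow> nat \<Rightarrow> nat set) \<Rightarrow>
    (nat \<Rightarrow> nat \<Rightarrow> 'w \<Rightarrow> 'v::real_vector) \<Rightarrow> nat \<Rightarrow> nat \<Rightarrow> 'w \<Rightarrow> 'v" where
  "vview \<alpha> p Ls g 0 i w = 0"
| "vview \<alpha> p Ls g (Suc t) i w =
     vview \<alpha> p Ls g t i w - (\<alpha> / real p) *\<^sub>R
       ((\<Sum>j\<in>Ls t i. g t j w)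
        + (\<Sum>j\<in>{1..p} - Ls t i. g t i w)
        + (if t > 0 then (\<Sum>j\<in>{1..p} - Ls (t - 1) i. g (t - 1) j w - g (t - 1) i w) else 0))"

primrec xglob :: "real \<Rightarrow> nat \<Rightarrow> (nat \<Rightarrow> nat \<Rightarrow> 'w \<Rightarrow> 'v::real_vector) \<Rightarrow> nat \<Rightarrow> 'w \<Rightarrow> 'v" where
  "xglob \<alpha> p g 0 w = 0"
| "xglob \<alpha> p g (Suc t) w = xglob \<alpha> p g t w - (\<alpha> / real p) *\<^sub>R (\<Sum>j\<in>{1..p}. g t j w)"

end

theory Submission imports Defs begin

lemma D_eq:
  fixes g :: "nat \<Rightarrow> nat \<Rightarrow> 'w \<Rightarrow> 'v::real_vector"
  assumes Ls: "\<forall>s k. k \<in> {1..p} \<longrightarrow> k \<in> Ls s k \<and> Ls s k \<subseteq> {1..p}"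
    and i: "i \<in> {1..p}"
  shows "xglob \<alpha> p g t w - vview \<alpha> p Ls g t i w =
     (if t = 0 then 0 else - (\<alpha> / real p) *\<^sub>R (\<Sum>j\<in>{1..p} - Ls (t-1) i. g (t-1) j w - g (t-1) i w))"
proof (induction t)
  case 0 then show ?case by simp
next
  case (Suc t)
  have sub: "Ls t i \<subseteq> {1..p}" using Ls i by blast
  have split: "(\<Sum>j\<in>{1..p}. g t j w) = (\<Sum>j\<in>Ls t i. g t j w) + (\<Sum>j\<in>{1..p} - Ls t i. g t j w)"
    using sum.subset_diff[OF sub, of "\<lambda>j. g t j w"] by (simp add: add.commute)
  have A: "(\<Sum>j\<in>{1..p} - Ls t i. g t j w - g t i w) = (\<Sum>j\<in>{1..p} - Ls t i. g t j w) - (\<Sum>j\<in>{1..p} - Ls t i. g t i w)"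
    by (simp add: sum_subtractf)
  have all: "(\<Sum>j\<in>{1..p}. g t j w) = (\<Sum>j\<in>Ls t i. g t j w) + (\<Sum>j\<in>{1..p} - Ls t i. g t i w)
     + (\<Sum>j\<in>{1..p} - Ls t i. g t j w - g t i w)"
    using split A by (simp add: algebra_simps)
  show ?case
  proof (cases t)
    case 0 then show ?thesis using Suc.IH all by (simp add: algebra_simps scaleR_add_right del: sum_constant)
  next
    case (Suc s)
    show ?thesis using Suc.IH all \<open>t = Suc s\<close> by (simp add: algebra_simps scaleR_add_right del: sum_constant)
  qed
qed

lemma vview_meas:
  fixes g :: "nat \<Rightarrow> nat \<Rightarrow> 'w \<Rightarrow> real^'d"
  assumes Ls: "\<forall>s k. k \<in> {1..p} \<longrightarrow> k \<in> Ls s k \<and> Ls s k \<subseteq> {1..p}"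
    and gm: "\<forall>s j. j \<in> {1..p} \<longrightarrow> g s j \<in> borel_measurable M"
  shows "i \<in> {1..p} \<Longrightarrow> vview \<alpha> p Ls g t i \<in> borel_measurable M"
proof (induction t arbitrary: i)
  case 0 then show ?case by simp
next
  case (Suc t)
  have s1: "\<And>j. j \<in> Ls t i \<Longrightarrow> j \<in> {1..p}" using Ls Suc.prems by blast
  have s2: "\<And>j. j \<in> Ls (t-1) i \<Longrightarrow> j \<in> {1..p}" using Ls Suc.prems by blast
  have m1: "(\<lambda>w. \<Sum>j\<in>Ls t i. g t j w) \<in> borel_measurable M"
    using gm s1 by (intro borel_measurable_sum) auto
  have m2: "(\<lambda>w. \<Sum>j\<in>{1..p} - Ls t i. g t i w) \<in> borel_measurable M"
    using gm Suc.prems by (intro borel_measurable_sum) auto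
  have m3: "(\<lambda>w. if t > 0 then (\<Sum>j\<in>{1..p} - Ls (t - 1) i. g (t - 1) j w - g (t - 1) i w) else 0) \<in> borel_measurable M"
  proof (cases "t > 0")
    case True then show ?thesis
      using gm Suc.prems by (simp del: sum_constant) (intro borel_measurable_sum borel_measurable_diff; auto)
  qed simp
  have m0: "vview \<alpha> p Ls g t i \<in> borel_measurable M" using Suc by blast
  show ?case
    using m0 m1 m2 m3 by (simp del: sum_constant)
qed

lemma xglob_meas:
  fixes g :: "nat \<Rightarrow> nat \<Rightarrow> 'w \<Rightarrow> real^'d"
  assumes gm: "\<forall>s j. j \<in> {1..p} \<longrightarrow> g s j \<in> borel_measurable M"
  shows "xglob \<alpha> p g t \<in> borel_measurable M"
  by (induction t) (use gm in \<open>auto intro!: borel_measurable_diff borel_measurable_scaleR borel_measurable_sum\<close>)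

lemma sq3: "(a + b + c)\<^sup>2 \<le> 3 * (a\<^sup>2 + b\<^sup>2 + c\<^sup>2)" for a b c :: real
  proof - have "0 \<le> (a-b)\<^sup>2 + (b-c)\<^sup>2 + (a-c)\<^sup>2" by simp then show ?thesis by (simp add: power2_eq_square algebra_simps) qed

lemma normsum_sq:
  fixes f :: "nat \<Rightarrow> 'v::real_normed_vector"
  shows "(norm (\<Sum>j\<in>S. f j))\<^sup>2 \<le> real (card S) * (\<Sum>j\<in>S. (norm (f j))\<^sup>2)"
proof -
  have "norm (\<Sum>j\<in>S. f j) \<le> (\<Sum>j\<in>S. norm (f j))" by (rule norm_sum)
  hence "(norm (\<Sum>j\<in>S. f j))\<^sup>2 \<le> (\<Sum>j\<in>S. norm (f j))\<^sup>2" by (simp add: power_mono)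
  also have "\<dots> \<le> (\<Sum>j\<in>S. (norm (f j))\<^sup>2) * card S" by (rule sum_squared_le_sum_of_squares)
  finally show ?thesis by (simp add: mult.commute)
qed


lemma nsq_meas: "(h::'w \<Rightarrow> 'v::euclidean_space) \<in> borel_measurable M \<Longrightarrow> (\<lambda>w. (norm (h w))\<^sup>2) \<in> borel_measurable M" by measurable
lemma enn_meas: "(h::'w \<Rightarrow> real) \<in> borel_measurable M \<Longrightarrow> (\<lambda>w. ennreal (h w)) \<in> borel_measurable M" by measurable

theorem mainTheorem11:
  fixes f :: "real^'d \<Rightarrow> real" and grad :: "real^'d \<Rightarrow> real^'d"
    and L \<alpha> \<sigma> :: real and p :: nat and Ls :: "nat \<Rightarrow> nat \<Rightarrow> nat set"
    and M :: "'w measure" and g :: "nat \<Rightarrow> nat \<Rightarrow> 'w \<Rightarrow> real^'d"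
    and i t :: nat
  assumes "prob_space M"
    and "\<forall>x. (f has_derivative (\<lambda>h. grad x \<bullet> h)) (at x)"
    and "\<forall>x y. norm (grad x - grad y) \<le> L * norm (x - y)"
    and "L > 0" and "\<alpha> > 0" and "\<alpha> \<le> 1 / (6 * L)" and "p \<ge> 1"
    and "\<forall>s k. k \<in> {1..p} \<longrightarrow> k \<in> Ls s k \<and> Ls s k \<subseteq> {1..p}"
    and "\<forall>s j. j \<in> {1..p} \<longrightarrow> g s j \<in> borel_measurable M"
    and "\<forall>s j. j \<in> {1..p} \<longrightarrow>
           (\<integral>\<^sup>+ w. ennreal ((norm (g s j w - grad (vview \<alpha> p Ls g s j w)))\<^sup>2) \<partial>M) \<le> ennreal (\<sigma>\<^sup>2)"
    and "i \<in> {1..p}"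
  shows "(\<integral>\<^sup>+ w. ennreal ((norm (xglob \<alpha> p g t w - vview \<alpha> p Ls g t i w))\<^sup>2) \<partial>M)
           \<le> ennreal (9 * \<sigma>\<^sup>2 * \<alpha>\<^sup>2)"
proof -
  note Lip = assms(3) and Lpos = assms(4) and apos = assms(5) and ale = assms(6) and p1 = assms(7)
    and Ls = assms(8) and gm = assms(9) and sig = assms(10)
  define V where "V t j w = vview \<alpha> p Ls g t j w" for t j w
  define X where "X t w = xglob \<alpha> p g t w" for t w
  define d where "d t j w = (norm (X t w - V t j w))\<^sup>2" for t j w
  define e where "e t j w = (norm (g t j w - grad (V t j w)))\<^sup>2" for t j w
  have gradc: "continuous_on UNIV grad"
    by (rule lipschitz_on_continuous_on[of L], rule lipschitz_onI) (use Lip Lpos in \<open>auto simp: dist_norm\<close>)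
  have gradm: "grad \<in> borel_measurable borel" by (rule borel_measurable_continuous_onI[OF gradc])
  have Vm: "V t j \<in> borel_measurable M" if "j \<in> {1..p}" for t j
    unfolding V_def[abs_def] using vview_meas[OF Ls gm that] by simp
  have Xm: "X t \<in> borel_measurable M" for t
    unfolding X_def[abs_def] using xglob_meas[OF gm] by simp
  have erm: "e t j \<in> borel_measurable M" if "j \<in> {1..p}" for t j
  proof -
    have "(\<lambda>w. grad (V t j w)) \<in> borel_measurable M" by (rule measurable_compose[OF Vm[OF that] gradm])
    then show ?thesis unfolding e_def[abs_def] using gm that by (intro nsq_meas borel_measurable_diff) auto
  qed
  have drm: "d t j \<in> borel_measurable M" if "j \<in> {1..p}" for t j
    unfolding d_def[abs_def] using Vm[OF that] Xm by (intro nsq_meas borel_measurable_diff) auto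
  have em: "(\<lambda>w. ennreal (e t j w)) \<in> borel_measurable M" if "j \<in> {1..p}" for t j
    using erm[OF that] by (rule enn_meas)
  have dm: "(\<lambda>w. ennreal (d t j w)) \<in> borel_measurable M" if "j \<in> {1..p}" for t j
    using drm[OF that] by (rule enn_meas)
  have La: "L\<^sup>2 * \<alpha>\<^sup>2 \<le> 1/36"
  proof -
    have "L * \<alpha> \<le> 1/6" using ale Lpos by (simp add: field_simps)
    moreover have "0 \<le> L * \<alpha>" using Lpos apos by simp
    ultimately have "(L*\<alpha>)\<^sup>2 \<le> (1/6)\<^sup>2" by (rule power_mono)
    then show ?thesis by (simp add: power_mult_distrib power_divide)
  qed
  have main: "\<forall>i\<in>{1..p}. (\<integral>\<^sup>+ w. ennreal (d t i w) \<partial>M) \<le> ennreal (9 * \<sigma>\<^sup>2 * \<alpha>\<^sup>2)"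
  proof (induction t)
    case 0 show ?case by (simp add: d_def X_def V_def)
  next
    case (Suc t)
    show ?case
    proof
      fix i assume i: "i \<in> {1..p}"
      define S where "S = {1..p} - Ls t i"
      define k where "k = card S"
      have Ssub: "S \<subseteq> {1..p}" unfolding S_def by blast
      have Sfin: "finite S" unfolding S_def by simp
      have kle: "k \<le> p - 1"
      proof -
        have "S \<subseteq> {1..p} - {i}" using Ls i unfolding S_def by blast
        hence "k \<le> card ({1..p} - {i})" unfolding k_def by (intro card_mono) auto
        also have "\<dots> = p - 1" using i by simp
        finally show ?thesis .
      qed
      define c where "c = (\<alpha> / real p)\<^sup>2 * real k"
      have c0: "0 \<le> c" unfolding c_def by simp
      define F where "F j w = 3 * e t j w + 3 * e t i w + 6 * L\<^sup>2 * d t i w + 6 * L\<^sup>2 * d t j w" for j w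
      have F0: "0 \<le> F j w" for j w unfolding F_def e_def d_def by simp
      have pj: "(norm (g t j w - g t i w))\<^sup>2 \<le> F j w" if j: "j \<in> {1..p}" for j w
      proof -
        define a where "a = norm (g t j w - grad (V t j w))"
        define b where "b = norm (g t i w - grad (V t i w))"
        define x where "x = norm (X t w - V t i w)"
        define y where "y = norm (X t w - V t j w)"
        have eqg: "g t j w - g t i w = ((g t j w - grad (V t j w)) + (grad (V t j w) - grad (V t i w))) - (g t i w - grad (V t i w))"
          by (simp add: algebra_simps)
        have t1: "norm (((g t j w - grad (V t j w)) + (grad (V t j w) - grad (V t i w))) - (g t i w - grad (V t i w)))
            \<le> norm ((g t j w - grad (V t j w)) + (grad (V t j w) - grad (V t i w))) + b"
          unfolding b_def by (rule norm_triangle_ineq4)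
        have t2: "norm ((g t j w - grad (V t j w)) + (grad (V t j w) - grad (V t i w))) \<le> a + norm (grad (V t j w) - grad (V t i w))"
          unfolding a_def by (rule norm_triangle_ineq)
        have t3: "norm (grad (V t j w) - grad (V t i w)) \<le> L * norm (V t j w - V t i w)" using Lip by blast
        have eqv: "V t j w - V t i w = (X t w - V t i w) - (X t w - V t j w)" by simp
        have t4: "norm (V t j w - V t i w) \<le> x + y" unfolding x_def y_def eqv by (rule norm_triangle_ineq4)
        have t5: "L * norm (V t j w - V t i w) \<le> L * (x + y)" using t4 Lpos by (intro mult_left_mono) auto
        have n: "norm (g t j w - g t i w) \<le> a + L * (x + y) + b"
          unfolding eqg using t1 t2 t3 t5 by linarith
        have "(norm (g t j w - g t i w))\<^sup>2 \<le> (a + L * (x + y) + b)\<^sup>2"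
          by (rule power_mono[OF n]) simp
        also have "\<dots> \<le> 3 * (a\<^sup>2 + (L * (x + y))\<^sup>2 + b\<^sup>2)" by (rule sq3)
        also have "(L * (x + y))\<^sup>2 \<le> 2 * L\<^sup>2 * x\<^sup>2 + 2 * L\<^sup>2 * y\<^sup>2"
        proof -
          have "(x+y)\<^sup>2 \<le> 2 * x\<^sup>2 + 2 * y\<^sup>2" using sum_squares_ge_zero[of "x-y" 0]
            by (simp add: power2_eq_square algebra_simps)
          hence "L\<^sup>2 * (x+y)\<^sup>2 \<le> L\<^sup>2 * (2 * x\<^sup>2 + 2 * y\<^sup>2)" by (simp add: mult_left_mono)
          moreover have "(L * (x + y))\<^sup>2 = L\<^sup>2 * (x+y)\<^sup>2" by (rule power_mult_distrib)
          moreover have "L\<^sup>2 * (2 * x\<^sup>2 + 2 * y\<^sup>2) = 2 * L\<^sup>2 * x\<^sup>2 + 2 * L\<^sup>2 * y\<^sup>2" by (simp add: algebra_simps)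
          ultimately show ?thesis by linarith
        qed
        finally show ?thesis unfolding F_def e_def d_def a_def b_def x_def y_def by simp
      qed
      have pw: "d (Suc t) i w \<le> c * (\<Sum>j\<in>S. F j w)" for w
      proof -
        have eqD: "X (Suc t) w - V (Suc t) i w = (- (\<alpha> / real p)) *\<^sub>R (\<Sum>j\<in>S. g t j w - g t i w)"
          unfolding X_def V_def S_def using D_eq[OF Ls i, of \<alpha> g "Suc t" w] by simp
        have "d (Suc t) i w = (\<alpha> / real p)\<^sup>2 * (norm (\<Sum>j\<in>S. g t j w - g t i w))\<^sup>2"
          unfolding d_def eqD by (simp only: norm_scaleR power_mult_distrib power2_abs power2_minus)
        also have "\<dots> \<le> (\<alpha> / real p)\<^sup>2 * (real k * (\<Sum>j\<in>S. (norm (g t j w - g t i w))\<^sup>2))"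
          unfolding k_def by (intro mult_left_mono normsum_sq) simp
        also have "\<dots> \<le> (\<alpha> / real p)\<^sup>2 * (real k * (\<Sum>j\<in>S. F j w))"
          using pj Ssub by (intro mult_left_mono sum_mono) auto
        finally show ?thesis unfolding c_def by (simp add: mult.assoc)
      qed
      define B where "B = 6 * \<sigma>\<^sup>2 + 108 * L\<^sup>2 * \<sigma>\<^sup>2 * \<alpha>\<^sup>2"
      have intF: "(\<integral>\<^sup>+ w. ennreal (F j w) \<partial>M) \<le> ennreal B" if j: "j \<in> {1..p}" for j
      proof -
        have eq: "ennreal (F j w) = ennreal 3 * ennreal (e t j w) + ennreal 3 * ennreal (e t i w)
             + ennreal (6 * L\<^sup>2) * ennreal (d t i w) + ennreal (6 * L\<^sup>2) * ennreal (d t j w)" for w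
          unfolding F_def e_def d_def by (simp add: ennreal_plus ennreal_mult)
        have "(\<integral>\<^sup>+ w. ennreal (F j w) \<partial>M) = ennreal 3 * (\<integral>\<^sup>+ w. ennreal (e t j w) \<partial>M)
             + ennreal 3 * (\<integral>\<^sup>+ w. ennreal (e t i w) \<partial>M)
             + ennreal (6 * L\<^sup>2) * (\<integral>\<^sup>+ w. ennreal (d t i w) \<partial>M)
             + ennreal (6 * L\<^sup>2) * (\<integral>\<^sup>+ w. ennreal (d t j w) \<partial>M)"
          unfolding eq using em[OF j] em[OF i] dm[OF j] dm[OF i]
          by (simp add: nn_integral_add nn_integral_cmult)
        also have "\<dots> \<le> ennreal 3 * ennreal (\<sigma>\<^sup>2) + ennreal 3 * ennreal (\<sigma>\<^sup>2)
             + ennreal (6 * L\<^sup>2) * ennreal (9 * \<sigma>\<^sup>2 * \<alpha>\<^sup>2) + ennreal (6 * L\<^sup>2) * ennreal (9 * \<sigma>\<^sup>2 * \<alpha>\<^sup>2)"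
          using sig j i Suc.IH unfolding e_def V_def
          by (intro add_mono mult_left_mono) auto
        also have "\<dots> = ennreal (3 * \<sigma>\<^sup>2 + 3 * \<sigma>\<^sup>2 + 6 * L\<^sup>2 * (9 * \<sigma>\<^sup>2 * \<alpha>\<^sup>2) + 6 * L\<^sup>2 * (9 * \<sigma>\<^sup>2 * \<alpha>\<^sup>2))"
          by (simp only: ennreal_plus ennreal_mult zero_le_power2 mult_nonneg_nonneg zero_le_numeral add_nonneg_nonneg ennreal_numeral)
        also have "\<dots> = ennreal B" unfolding B_def by (simp add: algebra_simps)
        finally show ?thesis .
      qed
      have "(\<integral>\<^sup>+ w. ennreal (d (Suc t) i w) \<partial>M) \<le> (\<integral>\<^sup>+ w. ennreal c * (\<Sum>j\<in>S. ennreal (F j w)) \<partial>M)"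
      proof (intro nn_integral_mono)
        fix w
        have s0: "0 \<le> (\<Sum>j\<in>S. F j w)" using F0 by (simp add: sum_nonneg)
        have "ennreal (d (Suc t) i w) \<le> ennreal (c * (\<Sum>j\<in>S. F j w))" using pw by (rule ennreal_leI)
        also have "\<dots> = ennreal c * (\<Sum>j\<in>S. ennreal (F j w))"
          using c0 s0 F0 by (simp add: ennreal_mult sum_ennreal)
        finally show "ennreal (d (Suc t) i w) \<le> ennreal c * (\<Sum>j\<in>S. ennreal (F j w))" .
      qed
      also have "\<dots> = ennreal c * (\<Sum>j\<in>S. (\<integral>\<^sup>+ w. ennreal (F j w) \<partial>M))"
      proof -
        have Fm: "(\<lambda>w. ennreal (F j w)) \<in> borel_measurable M" if "j \<in> S" for j
        proof -
          have j: "j \<in> {1..p}" using that Ssub by blast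
          show ?thesis unfolding F_def using erm[OF j] erm[OF i] drm[OF j] drm[OF i]
            by (intro enn_meas borel_measurable_add borel_measurable_times borel_measurable_const) auto
        qed
        have "(\<lambda>w. \<Sum>j\<in>S. ennreal (F j w)) \<in> borel_measurable M" using Fm by (rule borel_measurable_sum)
        then show ?thesis using Fm by (simp add: nn_integral_cmult nn_integral_sum)
      qed
      also have "\<dots> \<le> ennreal c * (\<Sum>j\<in>S. ennreal B)"
        using intF Ssub by (intro mult_left_mono sum_mono) auto
      also have "\<dots> = ennreal (c * real k * B)"
      proof -
        have B0': "0 \<le> B" unfolding B_def by simp
        show ?thesis unfolding k_def using c0 B0' by (simp add: ennreal_mult ennreal_of_nat_eq_real_of_nat mult.assoc)
      qed
      also have "\<dots> \<le> ennreal (9 * \<sigma>\<^sup>2 * \<alpha>\<^sup>2)"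
      proof (rule ennreal_leI)
        have kp: "real k \<le> real p" using kle p1 by simp
        have ck: "c * real k \<le> \<alpha>\<^sup>2"
        proof -
          have "real k * real k \<le> real p * real p" using kp by (intro mult_mono) auto
          have pp: "0 < real p" using p1 by simp
          have "c * real k = \<alpha>\<^sup>2 * (real k * real k) / (real p * real p)"
            unfolding c_def by (simp add: power_divide power2_eq_square)
          also have "\<dots> \<le> \<alpha>\<^sup>2 * (real p * real p) / (real p * real p)"
            using \<open>real k * real k \<le> real p * real p\<close> pp by (intro divide_right_mono mult_left_mono) auto
          also have "\<dots> = \<alpha>\<^sup>2" using pp by simp
          finally show ?thesis .
        qed
        have B9: "B \<le> 9 * \<sigma>\<^sup>2"
        proof -
          have "108 * L\<^sup>2 * \<sigma>\<^sup>2 * \<alpha>\<^sup>2 = 108 * \<sigma>\<^sup>2 * (L\<^sup>2 * \<alpha>\<^sup>2)" by simp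
          also have "\<dots> \<le> 108 * \<sigma>\<^sup>2 * (1/36)" using La by (intro mult_left_mono) auto
          finally show ?thesis unfolding B_def by simp
        qed
        have B0: "0 \<le> B" unfolding B_def by simp
        have "c * real k * B \<le> \<alpha>\<^sup>2 * (9 * \<sigma>\<^sup>2)" using ck B9 B0 c0 by (intro mult_mono) auto
        then show "c * real k * B \<le> 9 * \<sigma>\<^sup>2 * \<alpha>\<^sup>2" by (simp add: algebra_simps)
      qed
      finally show "(\<integral>\<^sup>+ w. ennreal (d (Suc t) i w) \<partial>M) \<le> ennreal (9 * \<sigma>\<^sup>2 * \<alpha>\<^sup>2)" .
    qed
  qed
  then show ?thesis using assms(11) unfolding d_def X_def V_def by blast
qed

end
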